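(* Let $(M,g)$ be an orientable Riemannian manifold and let $\lambda\in\mathbb{R}$. Let $a,b\in C^\infty(M)$ with $a>0$ satisfy the Helmholtz equations $\Delta a+\lambda a=0$ and $\Delta b+\lambda b=0$ (in particular, for $\lambda=0$, the Laplace equation). Then $m=a^2$ is a last multiplier of the gradient vector field $\nabla u$ of the function $u=\frac{b}{a}$.
   Context: $\nabla u$ denotes the gradient with respect to $g$, $V_g$ the Riemannian volume form, and $\Delta u=\operatorname{div}_{V_g}\nabla u$ the Laplacian, where for a vector field $A$, $\operatorname{div}_{V_g}A$ is defined by $L_AV_g=(\operatorname{div}_{V_g}A)V_g$. A function $m$ is a last multiplier of $A$ if $d(m\,i_AV_g)=0$, equivalently $A(m)+m\operatorname{div}_{V_g}A=0$. *)

theory Defs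
  imports "HOL-Analysis.Analysis"
begin

text \<open>Local-coordinate model of an (oriented) Riemannian manifold: an open chart domain
  U in real^'n carrying a smooth metric g (matrix of coefficients g_ij).\<close>

definition partial :: "'n::finite \<Rightarrow> (real^'n \<Rightarrow> real) \<Rightarrow> real^'n \<Rightarrow> real" where
  "partial i f x = frechet_derivative f (at x) (axis i 1)"

definition smooth_on :: "(real^'n::finite) set \<Rightarrow> (real^'n \<Rightarrow> real) \<Rightarrow> bool" where
  "smooth_on U f \<longleftrightarrow> (\<forall>is :: 'n list. (foldr partial is f) differentiable_on U)"

definition riemannian_metric_on ::
    "(real^'n::finite) set \<Rightarrow> (real^'n \<Rightarrow> real^'n^'n) \<Rightarrow> bool" where
  "riemannian_metric_on U g \<longleftrightarrow>
     (\<forall>i j. smooth_on U (\<lambda>x. g x $ i $ j)) \<and>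
     (\<forall>x\<in>U. transpose (g x) = g x) \<and>
     (\<forall>x\<in>U. \<forall>v. v \<noteq> 0 \<longrightarrow> v \<bullet> (g x *v v) > 0)"

text \<open>Density of the Riemannian volume form V_g = sqrt(det g) dx^1 ... dx^n.\<close>
definition vol_density :: "(real^'n::finite \<Rightarrow> real^'n^'n) \<Rightarrow> real^'n \<Rightarrow> real" where
  "vol_density g x = sqrt (det (g x))"

definition grad :: "(real^'n::finite \<Rightarrow> real^'n^'n) \<Rightarrow> (real^'n \<Rightarrow> real) \<Rightarrow> real^'n \<Rightarrow> real^'n" where
  "grad g u x = (\<chi> i. \<Sum>j\<in>UNIV. matrix_inv (g x) $ i $ j * partial j u x)"

text \<open>Divergence w.r.t. V_g, i.e. L_A V_g = (div A) V_g, in coordinates: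
  div A = (1/sqrt(det g)) d_i (sqrt(det g) A^i).\<close>
definition div_vol :: "(real^'n::finite \<Rightarrow> real^'n^'n) \<Rightarrow> (real^'n \<Rightarrow> real^'n) \<Rightarrow> real^'n \<Rightarrow> real" where
  "div_vol g A x = (1 / vol_density g x) *
     (\<Sum>i\<in>UNIV. partial i (\<lambda>y. vol_density g y * A y $ i) x)"

definition laplacian :: "(real^'n::finite \<Rightarrow> real^'n^'n) \<Rightarrow> (real^'n \<Rightarrow> real) \<Rightarrow> real^'n \<Rightarrow> real" where
  "laplacian g u = div_vol g (grad g u)"

definition vf_apply :: "(real^'n::finite \<Rightarrow> real^'n) \<Rightarrow> (real^'n \<Rightarrow> real) \<Rightarrow> real^'n \<Rightarrow> real" where
  "vf_apply A m x = (\<Sum>i\<in>UNIV. A x $ i * partial i m x)"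

definition last_multiplier ::
    "(real^'n::finite) set \<Rightarrow> (real^'n \<Rightarrow> real^'n^'n) \<Rightarrow> (real^'n \<Rightarrow> real) \<Rightarrow> (real^'n \<Rightarrow> real^'n) \<Rightarrow> bool" where
  "last_multiplier U g m A \<longleftrightarrow> (\<forall>x\<in>U. vf_apply A m x + m x * div_vol g A x = 0)"

end

theory Submission
  imports Defs
begin

lemma sqrt_differentiable_nz:
  fixes t :: real assumes "t \<noteq> 0" shows "sqrt differentiable (at t)"
proof -
  have "DERIV sqrt t :> (if t > 0 then inverse (sqrt t) / 2 else - inverse (sqrt t) / 2)"
    by (rule DERIV_real_sqrt_generic) (use assms in auto)
  then show ?thesis
    unfolding differentiable_def using has_field_derivative_imp_has_derivative by blast
qed

lemma differentiable_prod_at: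
  fixes f :: "'i \<Rightarrow> 'a::real_normed_vector \<Rightarrow> real"
  assumes "finite S" "\<forall>i\<in>S. f i differentiable (at x)"
  shows "(\<lambda>y. \<Prod>i\<in>S. f i y) differentiable (at x)"
  using assms
proof (induction S rule: finite_induct)
  case empty then show ?case by simp
next
  case (insert k S)
  then show ?case by (simp add: prod.insert)
qed

lemma det_differentiable:
  fixes M :: "real^'n::finite \<Rightarrow> real^'m::finite^'m"
  assumes "\<And>i j. (\<lambda>y. M y $ i $ j) differentiable (at x)"
  shows "(\<lambda>y. det (M y)) differentiable (at x)"
  unfolding det_def
  apply (rule differentiable_sum)
   apply (simp add: finite_permutations)
  apply (intro ballI differentiable_mult differentiable_const differentiable_prod_at)
  using assms by auto

lemma differentiable_transform_open:
  assumes "f differentiable (at x)" "open S" "x \<in> S" "\<And>y. y \<in> S \<Longrightarrow> f y = g y"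
  shows "g differentiable (at x)"
  using assms has_derivative_transform_within_open unfolding differentiable_def by blast

lemma partial_transform_open:
  assumes "f differentiable (at x)" "open S" "x \<in> S" "\<And>y. y \<in> S \<Longrightarrow> f y = g y"
  shows "partial i g x = partial i f x"
  unfolding partial_def using frechet_derivative_transform_within_open[OF assms] by simp

lemma partial_has: "(f has_derivative f') (at x) \<Longrightarrow> partial i f x = f' (axis i 1)"
  unfolding partial_def by (simp add: frechet_derivative_at[symmetric])

lemma fd: "f differentiable (at x) \<Longrightarrow> (f has_derivative frechet_derivative f (at x)) (at x)"
  using frechet_derivative_works by blast

lemma partial_mult:
  fixes f h :: "real^'n::finite \<Rightarrow> real"
  assumes "f differentiable (at x)" "h differentiable (at x)"
  shows "partial i (\<lambda>y. f y * h y) x = f x * partial i h x + partial i f x * h x"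
  using partial_has[OF has_derivative_mult[OF fd[OF assms(1)] fd[OF assms(2)]]]
  by (simp add: partial_def)

lemma partial_add:
  fixes f h :: "real^'n::finite \<Rightarrow> real"
  assumes "f differentiable (at x)" "h differentiable (at x)"
  shows "partial i (\<lambda>y. f y + h y) x = partial i f x + partial i h x"
  using partial_has[OF has_derivative_add[OF fd[OF assms(1)] fd[OF assms(2)]]]
  by (simp add: partial_def)

lemma partial_diff:
  fixes f h :: "real^'n::finite \<Rightarrow> real"
  assumes "f differentiable (at x)" "h differentiable (at x)"
  shows "partial i (\<lambda>y. f y - h y) x = partial i f x - partial i h x"
  using partial_has[OF has_derivative_diff[OF fd[OF assms(1)] fd[OF assms(2)]]]
  by (simp add: partial_def)

lemma partial_divide:
  fixes f h :: "real^'n::finite \<Rightarrow> real"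
  assumes "f differentiable (at x)" "h differentiable (at x)" "h x \<noteq> 0"
  shows "partial i (\<lambda>y. f y / h y) x = (partial i f x * h x - f x * partial i h x) / (h x)^2"
  using partial_has[OF has_derivative_divide[OF fd[OF assms(1)] fd[OF assms(2)] assms(3)]] assms(3)
  by (simp add: partial_def field_simps power2_eq_square)

lemma partial_sq:
  fixes f :: "real^'n::finite \<Rightarrow> real"
  assumes "f differentiable (at x)"
  shows "partial i (\<lambda>y. (f y)^2) x = 2 * f x * partial i f x"
proof -
  have "(\<lambda>y. (f y)^2) = (\<lambda>y. f y * f y)" by (simp add: power2_eq_square)
  then show ?thesis using partial_mult[OF assms assms, of i] by simp
qed

lemma smooth_diff:
  assumes "smooth_on U f" "open U" "y \<in> U"
  shows "f differentiable (at y)" "partial j f differentiable (at y)"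
proof -
  have "(foldr partial [] f) differentiable_on U" "(foldr partial [j] f) differentiable_on U"
    using assms(1) unfolding smooth_on_def by blast+
  then show "f differentiable (at y)" "partial j f differentiable (at y)"
    using assms(2,3) differentiable_on_eq_differentiable_at by auto
qed

lemma inv_props:
  fixes A :: "real^'n::finite^'n"
  assumes "\<forall>v. v \<noteq> 0 \<longrightarrow> v \<bullet> (A *v v) > 0"
  shows "A ** matrix_inv A = mat 1" "matrix_inv A ** A = mat 1" "det A \<noteq> 0"
proof -
  have "\<forall>v. A *v v = 0 \<longrightarrow> v = 0"
    using assms by force
  then have inv: "invertible A"
    using matrix_left_invertible_ker invertible_left_inverse by blast
  then have "\<exists>A'. A ** A' = mat 1 \<and> A' ** A = mat 1" unfolding invertible_def by blast
  then have "A ** matrix_inv A = mat 1 \<and> matrix_inv A ** A = mat 1"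
    unfolding matrix_inv_def by (rule someI_ex)
  then show "A ** matrix_inv A = mat 1" "matrix_inv A ** A = mat 1" by auto
  show "det A \<noteq> 0" using inv invertible_det_nz by blast
qed

lemma inv_sym:
  fixes A :: "real^'n::finite^'n"
  assumes "A ** M = mat 1" "M ** A = mat 1" "transpose A = A"
  shows "M $ i $ j = M $ j $ i"
proof -
  have "transpose M ** A = mat 1"
    using assms by (metis matrix_transpose_mul transpose_mat)
  then have "transpose M = M"
    by (metis assms(1) matrix_mul_assoc matrix_mul_lid matrix_mul_rid)
  then show ?thesis by (metis transpose_def vec_lambda_beta)
qed

lemma inv_cramer:
  fixes A :: "real^'n::finite^'n"
  assumes "A ** M = mat 1" "det A \<noteq> 0"
  shows "M $ i $ j = det (\<chi> r c. if c = i then axis j 1 $ r else A $ r $ c) / det A"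
proof -
  have "A *v (M *v axis j 1) = axis j 1"
    by (simp add: matrix_vector_mul_assoc assms(1))
  then have "M *v axis j 1 = (\<chi> k. det(\<chi> r c. if c=k then axis j 1 $ r else A$r$c) / det A)"
    using cramer[OF assms(2)] by blast
  moreover have "(M *v axis j 1) $ i = M $ i $ j"
    by (simp add: matrix_vector_mult_def axis_def if_distrib cong: if_cong)
  ultimately show ?thesis by simp
qed


theorem proposition3p4:
  fixes U :: "(real^'n::finite) set"
    and g :: "real^'n \<Rightarrow> real^'n^'n"
    and a b :: "real^'n \<Rightarrow> real"
    and lam :: real
  assumes "open U"
    and "riemannian_metric_on U g"
    and "smooth_on U a" and "smooth_on U b"
    and "\<forall>x\<in>U. a x > 0"
    and "\<forall>x\<in>U. laplacian g a x + lam * a x = 0"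
    and "\<forall>x\<in>U. laplacian g b x + lam * b x = 0"
  shows "last_multiplier U g (\<lambda>x. (a x)^2) (grad g (\<lambda>x. b x / a x))"
proof -
  note gm = assms(2)[unfolded riemannian_metric_on_def]
  define \<rho> where "\<rho> = vol_density g"
  define G where "G = (\<lambda>i j y. matrix_inv (g y) $ i $ j)"
  have ent: "(\<lambda>y. g y $ i $ j) differentiable (at y)" if "y \<in> U" for i j y
    using smooth_diff(1)[OF _ assms(1) that] gm by blast
  have inv1: "g y ** matrix_inv (g y) = mat 1" and inv2: "matrix_inv (g y) ** g y = mat 1"
    and detnz: "det (g y) \<noteq> 0" if "y \<in> U" for y
    using inv_props[of "g y"] gm that by auto
  have ddet: "(\<lambda>y. det (g y)) differentiable (at y)" if "y \<in> U" for y
    by (rule det_differentiable) (use ent that in auto)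
  have d\<rho>: "\<rho> differentiable (at y)" if "y \<in> U" for y
  proof -
    have "(\<lambda>y. sqrt (det (g y))) differentiable (at y)"
      by (rule differentiable_compose[of sqrt, OF sqrt_differentiable_nz[OF detnz[OF that]] ddet[OF that]])
    then show ?thesis unfolding \<rho>_def vol_density_def[abs_def] .
  qed
  have \<rho>nz: "\<rho> y \<noteq> 0" if "y \<in> U" for y
    using detnz[OF that] unfolding \<rho>_def vol_density_def by simp
  have dG: "G i j differentiable (at y)" if "y \<in> U" for i j y
  proof (rule differentiable_transform_open[OF _ assms(1) that])
    have "(\<lambda>z. det (\<chi> r c. if c = i then axis j 1 $ r else g z $ r $ c)) differentiable (at y)"
    proof (rule det_differentiable)
      fix r c
      show "(\<lambda>z. (\<chi> r c. if c = i then axis j 1 $ r else g z $ r $ c) $ r $ c) differentiable (at y)"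
        using ent[OF that] by (cases "c = i") auto
    qed
    then show "(\<lambda>z. det (\<chi> r c. if c = i then axis j 1 $ r else g z $ r $ c) / det (g z)) differentiable (at y)"
      using ddet[OF that] detnz[OF that] by (rule differentiable_divide)
  next
    fix z assume "z \<in> U"
    then show "det (\<chi> r c. if c = i then axis j 1 $ r else g z $ r $ c) / det (g z) = G i j z"
      unfolding G_def using inv_cramer[OF inv1 detnz] by simp
  qed
  have Gsym: "G i j y = G j i y" if "y \<in> U" for i j y
    unfolding G_def using inv_sym[OF inv1[OF that] inv2[OF that]] gm that by blast
  have gradeq: "grad g f y $ i = (\<Sum>j\<in>UNIV. G i j y * partial j f y)" for f y i
    unfolding grad_def G_def by simp
  have dP: "(\<lambda>y. \<rho> y * grad g f y $ i) differentiable (at y)"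
    if "smooth_on U f" "y \<in> U" for f i y
    unfolding gradeq
    by (intro differentiable_mult differentiable_sum d\<rho> ballI finite_UNIV dG
        smooth_diff(2)[OF that(1) assms(1)] that) auto
  show ?thesis
    unfolding last_multiplier_def
  proof
    fix x assume xU: "x \<in> U"
    show "vf_apply (grad g (\<lambda>x. b x / a x)) (\<lambda>x. (a x)\<^sup>2) x +
          (a x)\<^sup>2 * div_vol g (grad g (\<lambda>x. b x / a x)) x = 0"
    proof -
      define u where "u = (\<lambda>x. b x / a x)"
      define N where "N = (\<lambda>i y. a y * (\<rho> y * grad g b y $ i) - b y * (\<rho> y * grad g a y $ i))"
      have da: "a differentiable (at y)" and db: "b differentiable (at y)" and anz: "a y \<noteq> 0"
        if "y \<in> U" for y
        using smooth_diff(1)[OF assms(3,1) that] smooth_diff(1)[OF assms(4,1) that] assms(5) that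
        by auto
      have du: "partial j u y = (partial j b y * a y - b y * partial j a y) / (a y)^2"
        if "y \<in> U" for j y
        unfolding u_def by (rule partial_divide[OF db[OF that] da[OF that] anz[OF that]])
      have key: "\<rho> y * grad g u y $ i = N i y / (a y)^2" if "y \<in> U" for i y
      proof -
        have "(\<Sum>j\<in>UNIV. G i j y * ((partial j b y * a y - b y * partial j a y) / (a y)^2))
            = (a y * (\<Sum>j\<in>UNIV. G i j y * partial j b y) - b y * (\<Sum>j\<in>UNIV. G i j y * partial j a y)) / (a y)^2"
          by (simp add: sum_distrib_left sum_divide_distrib sum_subtractf[symmetric] algebra_simps)
        then show ?thesis
          unfolding N_def gradeq using du[OF that] by (simp add: algebra_simps)
      qed
      have dN: "N i differentiable (at x)" for i
        unfolding N_def
        by (intro differentiable_diff differentiable_mult da db dP assms(3,4) xU)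
      have dNa: "(\<lambda>y. N i y / (a y)^2) differentiable (at x)" for i
        using dN da[OF xU] anz[OF xU] by (intro differentiable_divide differentiable_power) auto
      have pdiv: "partial i (\<lambda>y. \<rho> y * grad g u y $ i) x
          = (partial i (N i) x * (a x)^2 - N i x * (2 * a x * partial i a x)) / ((a x)^2)^2" for i
      proof -
        have "partial i (\<lambda>y. \<rho> y * grad g u y $ i) x = partial i (\<lambda>y. N i y / (a y)^2) x"
          by (rule partial_transform_open[OF dNa assms(1) xU]) (simp add: key)
        also have "\<dots> = (partial i (N i) x * (a x)^2 - N i x * partial i (\<lambda>y. (a y)^2) x) / ((a x)^2)^2"
          using dN da[OF xU] anz[OF xU] by (intro partial_divide differentiable_power) auto
        finally show ?thesis using partial_sq[OF da[OF xU]] by simp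
      qed
      have pN: "partial i (N i) x = partial i a x * (\<rho> x * grad g b x $ i) + a x * partial i (\<lambda>y. \<rho> y * grad g b y $ i) x
          - (partial i b x * (\<rho> x * grad g a x $ i) + b x * partial i (\<lambda>y. \<rho> y * grad g a y $ i) x)" for i
      proof -
        have "partial i (N i) x = partial i (\<lambda>y. a y * (\<rho> y * grad g b y $ i)) x - partial i (\<lambda>y. b y * (\<rho> y * grad g a y $ i)) x"
          unfolding N_def
          by (intro partial_diff differentiable_mult da db dP assms(3,4) xU)
        then show ?thesis
          using partial_mult[OF da[OF xU] dP[OF assms(4) xU], of i] partial_mult[OF db[OF xU] dP[OF assms(3) xU], of i]
          by (simp add: algebra_simps)
      qed
      have hb: "(\<Sum>i\<in>UNIV. partial i (\<lambda>y. \<rho> y * grad g b y $ i) x) = - lam * b x * \<rho> x"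
        using assms(7) xU \<rho>nz[OF xU] unfolding laplacian_def div_vol_def \<rho>_def[symmetric]
        by (auto simp: field_simps)
      have ha: "(\<Sum>i\<in>UNIV. partial i (\<lambda>y. \<rho> y * grad g a y $ i) x) = - lam * a x * \<rho> x"
        using assms(6) xU \<rho>nz[OF xU] unfolding laplacian_def div_vol_def \<rho>_def[symmetric]
        by (auto simp: field_simps)
      have swap: "(\<Sum>i\<in>UNIV. \<Sum>j\<in>UNIV. \<rho> x * (partial i a x * (partial j b x * G i j x)))
          = (\<Sum>i\<in>UNIV. \<Sum>j\<in>UNIV. \<rho> x * (partial i b x * (partial j a x * G i j x)))"
        apply (subst sum.swap)
        apply (rule sum.cong[OF refl])+
        using Gsym[OF xU] by (simp add: algebra_simps)
      have symsum: "(\<Sum>i\<in>UNIV. partial i a x * (\<rho> x * grad g b x $ i) - partial i b x * (\<rho> x * grad g a x $ i)) = 0"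
        using swap unfolding gradeq
        by (simp add: sum_subtractf sum_distrib_left algebra_simps)
      have sumN: "(\<Sum>i\<in>UNIV. partial i (N i) x) = 0"
      proof -
        have "(\<Sum>i\<in>UNIV. partial i (N i) x) =
          (\<Sum>i\<in>UNIV. partial i a x * (\<rho> x * grad g b x $ i) - partial i b x * (\<rho> x * grad g a x $ i))
          + a x * (\<Sum>i\<in>UNIV. partial i (\<lambda>y. \<rho> y * grad g b y $ i) x)
          - b x * (\<Sum>i\<in>UNIV. partial i (\<lambda>y. \<rho> y * grad g a y $ i) x)"
          unfolding pN by (simp add: sum_subtractf sum.distrib sum_distrib_left algebra_simps)
        then show ?thesis using symsum ha hb by (simp add: algebra_simps)
      qed
      have gu: "grad g u x $ i = N i x / (\<rho> x * (a x)^2)" for i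
      proof -
        have "grad g u x $ i = (\<rho> x * grad g u x $ i) / \<rho> x" using \<rho>nz[OF xU] by simp
        also have "\<dots> = N i x / (a x)^2 / \<rho> x" using key[OF xU, of i] by simp
        finally show ?thesis by (simp add: mult.commute)
      qed
      have termeq: "grad g u x $ i * partial i (\<lambda>x. (a x)\<^sup>2) x + (a x)\<^sup>2 * (1 / \<rho> x) * partial i (\<lambda>y. \<rho> y * grad g u y $ i) x
          = partial i (N i) x / \<rho> x" for i
        unfolding gu pdiv partial_sq[OF da[OF xU]]
        using \<rho>nz[OF xU] anz[OF xU] by (simp add: field_simps power2_eq_square)
      have "vf_apply (grad g u) (\<lambda>x. (a x)\<^sup>2) x + (a x)\<^sup>2 * div_vol g (grad g u) x
          = (\<Sum>i\<in>UNIV. grad g u x $ i * partial i (\<lambda>x. (a x)\<^sup>2) x + (a x)\<^sup>2 * (1 / \<rho> x) * partial i (\<lambda>y. \<rho> y * grad g u y $ i) x)"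
        unfolding vf_apply_def div_vol_def \<rho>_def[symmetric]
        by (simp add: sum.distrib sum_distrib_left mult.assoc)
      also have "\<dots> = (\<Sum>i\<in>UNIV. partial i (N i) x) / \<rho> x"
        unfolding termeq by (simp add: sum_divide_distrib)
      finally show ?thesis using sumN unfolding u_def by simp
    qed
  qed
qed

end
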